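(* There exist an absolute constant $\delta > 0$ and a sequence of compact rectifiable sets $E_n \subset [0,1]^2 \subset \mathbb{R}^2$ ($n \geq 2$) such that: (1) $\mathcal{H}^1(E_n) = 1$; (2) $\mathrm{Fav}(E_n) \geq \delta$; (3) there is an absolute constant $c > 0$ such that for any $\alpha \in [2n^{-2},1)$ and any curve $\Gamma$ with $\mathcal{H}^1(\Gamma \cap E_n) \geq \alpha$ we have $\mathcal{H}^1(\Gamma) \geq c\,\alpha n$. In particular, for every $M \geq 1$ and every $M$-Lipschitz graph $\Gamma$, $\mathcal{H}^1(\Gamma \cap E_n) \leq C M n^{-1}$ for an absolute constant $C$.
   Context: For $\theta\in[0,\pi)$, $\pi_\theta(x) = x\cdot(\cos\theta,\sin\theta)$ and $\mathrm{Fav}(E) = \int_0^\pi \mathcal{H}^1(\pi_\theta(E))\,d\theta$. A curve is a continuous image of a compact interval. An $M$-Lipschitz graph is a set $\{tu + f(t)u^\perp : t \in A\}$ with $u,u^\perp$ orthonormal, $A\subset\mathbb{R}$, $f$ $M$-Lipschitz. *)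

theory Defs
  imports "HOL-Analysis.Analysis"
begin

text \<open>One-dimensional Hausdorff (outer) measure on a metric space, via the
  Caratheodory construction with countable covers by bounded sets of small diameter
  (normalisation: H^1 of a segment is its length).\<close>

definition hausdorff_pre1 :: "real \<Rightarrow> 'a::metric_space set \<Rightarrow> ennreal" where
  "hausdorff_pre1 d E =
     (INF U \<in> {U :: nat \<Rightarrow> 'a set. E \<subseteq> (\<Union>i. U i) \<and>
                 (\<forall>i. bounded (U i) \<and> diameter (U i) \<le> d)}.
        (\<Sum>i. ennreal (diameter (U i))))"

definition H1 :: "'a::metric_space set \<Rightarrow> ennreal" where
  "H1 E = (SUP d \<in> {0<..}. hausdorff_pre1 d E)"

definition proj :: "real \<Rightarrow> real \<times> real \<Rightarrow> real" where
  "proj t x = fst x * cos t + snd x * sin t"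

definition Fav :: "(real \<times> real) set \<Rightarrow> ennreal" where
  "Fav E = (\<integral>\<^sup>+ t \<in> {0..<pi}. H1 (proj t ` E) \<partial>lborel)"

definition rectifiable_set :: "(real \<times> real) set \<Rightarrow> bool" where
  "rectifiable_set E \<longleftrightarrow>
     (\<exists>f :: nat \<Rightarrow> real \<Rightarrow> real \<times> real. (\<forall>i. \<exists>L. lipschitz_on L UNIV (f i)) \<and>
        H1 (E - (\<Union>i. range (f i))) = 0)"

definition is_curve_set :: "(real \<times> real) set \<Rightarrow> bool" where
  "is_curve_set G \<longleftrightarrow> (\<exists>(g :: real \<Rightarrow> real \<times> real) a b. a \<le> b \<and> continuous_on {a..b} g \<and> G = g ` {a..b})"

definition lipschitz_graph :: "real \<Rightarrow> (real \<times> real) set \<Rightarrow> bool" where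
  "lipschitz_graph M G \<longleftrightarrow>
     (\<exists>u v (A :: real set) f. norm u = 1 \<and> norm v = 1 \<and> inner u v = 0 \<and>
        lipschitz_on M A f \<and> G = (\<lambda>t. t *\<^sub>R u + f t *\<^sub>R v) ` A)"

end

theory Submission
  imports Defs
begin


lemma pre_le_cover:
  assumes "A \<subseteq> (\<Union>i. U i)" "\<And>i. bounded (U i)" "\<And>i. diameter (U i) \<le> d"
  shows "hausdorff_pre1 d A \<le> (\<Sum>i. ennreal (diameter (U i)))"
  unfolding hausdorff_pre1_def by (rule INF_lower) (use assms in auto)

lemma le_pre:
  assumes "\<And>U. A \<subseteq> (\<Union>i. U i) \<Longrightarrow> (\<And>i. bounded (U i)) \<Longrightarrow> (\<And>i. diameter (U i) \<le> d)
     \<Longrightarrow> X \<le> (\<Sum>i. ennreal (diameter (U i)))"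
  shows "X \<le> hausdorff_pre1 d A"
  unfolding hausdorff_pre1_def by (rule INF_greatest) (use assms in auto)

lemma pre_mono: "A \<subseteq> B \<Longrightarrow> hausdorff_pre1 d A \<le> hausdorff_pre1 d B"
  by (rule le_pre, rule pre_le_cover) auto

lemma H1_mono: "A \<subseteq> B \<Longrightarrow> H1 A \<le> H1 B"
  unfolding H1_def by (rule SUP_mono) (use pre_mono in blast)

lemma pre_le_H1: "d > 0 \<Longrightarrow> hausdorff_pre1 d A \<le> H1 A"
  unfolding H1_def by (rule SUP_upper) auto

lemma H1_le: "(\<And>d. d > 0 \<Longrightarrow> hausdorff_pre1 d A \<le> X) \<Longrightarrow> H1 A \<le> X"
  unfolding H1_def by (rule SUP_least) auto

lemma diam_image_le:
  fixes f :: "'a::metric_space \<Rightarrow> 'b::metric_space"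
  assumes lip: "\<And>x y. x\<in>S \<Longrightarrow> y\<in>S \<Longrightarrow> dist (f x) (f y) \<le> dist x y"
    and b: "bounded U"
  shows "bounded (f ` (U \<inter> S)) \<and> diameter (f ` (U \<inter> S)) \<le> diameter U"
proof (cases "U \<inter> S = {}")
  case True then show ?thesis using diameter_ge_0[OF b] by auto
next
  case False
  then obtain x0 where x0: "x0 \<in> U \<inter> S" by auto
  have bd: "bounded (f ` (U \<inter> S))"
    unfolding bounded_def
  proof (intro exI ballI)
    fix z assume "z \<in> f ` (U \<inter> S)"
    then obtain y where y: "y \<in> U \<inter> S" "z = f y" by auto
    have "dist (f x0) z \<le> dist x0 y" using lip x0 y by auto
    also have "\<dots> \<le> diameter U" using diameter_bounded_bound[OF b] x0 y by auto
    finally show "dist (f x0) z \<le> diameter U" .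
  qed
  have "diameter (f ` (U \<inter> S)) \<le> diameter U"
    unfolding diameter_def[of "f ` (U \<inter> S)"] using False
    apply simp
    apply (rule cSUP_least)
     apply (use False in auto)[1]
    subgoal for p
      apply (cases p)
      apply clarsimp
      by (metis IntI b diameter_bounded_bound lip order_trans)
    done
  then show ?thesis using bd by auto
qed

lemma H1_lip_image:
  fixes f :: "'a::metric_space \<Rightarrow> 'b::metric_space"
  assumes lip: "\<And>x y. x\<in>S \<Longrightarrow> y\<in>S \<Longrightarrow> dist (f x) (f y) \<le> dist x y"
  shows "H1 (f ` S) \<le> H1 S"
proof (rule H1_le)
  fix d :: real assume d: "d > 0"
  have "hausdorff_pre1 d (f ` S) \<le> hausdorff_pre1 d S"
  proof (rule le_pre)
    fix U :: "nat \<Rightarrow> 'a set" assume c: "S \<subseteq> (\<Union>i. U i)" "\<And>i. bounded (U i)" "\<And>i. diameter (U i) \<le> d"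
    have "hausdorff_pre1 d (f ` S) \<le> (\<Sum>i. ennreal (diameter (f ` (U i \<inter> S))))"
      apply (rule pre_le_cover)
      using c diam_image_le[OF lip c(2)] by (auto, fastforce, meson order_trans)
    also have "\<dots> \<le> (\<Sum>i. ennreal (diameter (U i)))"
      apply (rule suminf_le)
      using diam_image_le[OF lip c(2)] by (auto intro: ennreal_leI)
    finally show "hausdorff_pre1 d (f ` S) \<le> (\<Sum>i. ennreal (diameter (U i)))" .
  qed
  also have "\<dots> \<le> H1 S" using pre_le_H1 d by auto
  finally show "hausdorff_pre1 d (f ` S) \<le> H1 S" .
qed



lemma real_sup_inf_diam:
  fixes U :: "real set"
  assumes b: "bounded U" and ne: "U \<noteq> {}"
  shows "Sup U - Inf U \<le> diameter U" "U \<subseteq> {Inf U..Sup U}"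
proof -
  have ba: "bdd_above U" and bb: "bdd_below U" using b by (auto intro: bounded_imp_bdd_above bounded_imp_bdd_below)
  have 1: "Sup U \<le> x + diameter U" if "x \<in> U" for x
  proof (rule cSup_least[OF ne])
    fix y assume "y \<in> U"
    then have "dist x y \<le> diameter U" using diameter_bounded_bound[OF b that] by auto
    then show "y \<le> x + diameter U" by (auto simp: dist_real_def abs_le_iff)
  qed
  have "Sup U - diameter U \<le> Inf U"
    apply (rule cInf_greatest[OF ne]) using 1 by force
  then show "Sup U - Inf U \<le> diameter U" by simp
  show "U \<subseteq> {Inf U..Sup U}" using ba bb by (auto intro: cInf_lower cSup_upper)
qed

lemma lborel_le_H1:
  fixes S :: "real set"
  assumes S: "S \<in> sets lborel"
  shows "emeasure lborel S \<le> H1 S"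
proof -
  have "emeasure lborel S \<le> hausdorff_pre1 1 S"
  proof (rule le_pre)
    fix U :: "nat \<Rightarrow> real set"
    assume c: "S \<subseteq> (\<Union>i. U i)" "\<And>i. bounded (U i)" "\<And>i. diameter (U i) \<le> 1"
    define W where "W i = (if U i = {} then {} else {Inf (U i)..Sup (U i)})" for i
    have Wm: "W i \<in> sets lborel" for i by (simp add: W_def)
    have sub: "U i \<subseteq> W i" for i using real_sup_inf_diam(2)[OF c(2)] by (auto simp: W_def)
    have mw: "emeasure lborel (W i) \<le> ennreal (diameter (U i))" for i
    proof (cases "U i = {}")
      case False
      then have "Inf (U i) \<le> Sup (U i)" using real_sup_inf_diam(2)[OF c(2), of i] by auto
      then show ?thesis using real_sup_inf_diam(1)[OF c(2) False] False
        by (auto simp: W_def intro: ennreal_leI)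
    qed (auto simp: W_def)
    have "emeasure lborel S \<le> emeasure lborel (\<Union>i. W i)"
    proof (rule emeasure_mono)
      show "S \<subseteq> (\<Union>i. W i)" using c(1) sub by blast
      show "(\<Union>i. W i) \<in> sets lborel" using Wm by (intro sets.countable_UN) auto
    qed
    also have "\<dots> \<le> (\<Sum>i. emeasure lborel (W i))"
      by (rule emeasure_subadditive_countably) (use Wm in auto)
    also have "\<dots> \<le> (\<Sum>i. ennreal (diameter (U i)))"
      by (rule suminf_le) (use mw in auto)
    finally show "emeasure lborel S \<le> (\<Sum>i. ennreal (diameter (U i)))" .
  qed
  also have "\<dots> \<le> H1 S" by (rule pre_le_H1) simp
  finally show ?thesis .
qed

lemma H1_sep_add:
  fixes A B :: "'a::metric_space set"
  assumes r: "r > 0" and sep: "\<And>x y. x \<in> A \<Longrightarrow> y \<in> B \<Longrightarrow> r \<le> dist x y"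
  shows "H1 A + H1 B \<le> H1 (A \<union> B)"
proof -
  have key: "hausdorff_pre1 d A + hausdorff_pre1 d B \<le> hausdorff_pre1 d (A \<union> B)"
    if d: "0 < d" "d < r" for d
  proof (rule le_pre)
    fix U :: "nat \<Rightarrow> 'a set"
    assume c: "A \<union> B \<subseteq> (\<Union>i. U i)" "\<And>i. bounded (U i)" "\<And>i. diameter (U i) \<le> d"
    define UA where "UA i = (if U i \<inter> B = {} then U i else {})" for i
    define UB where "UB i = (if U i \<inter> B = {} then {} else U i)" for i
    have noA: "U i \<inter> A = {}" if hB: "U i \<inter> B \<noteq> {}" for i
    proof (rule ccontr)
      assume "U i \<inter> A \<noteq> {}"
      then obtain x y where "x \<in> U i \<inter> A" "y \<in> U i \<inter> B" using hB by blast
      then have "dist x y \<le> diameter (U i)" using diameter_bounded_bound[OF c(2)] by blast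
      then have "dist x y \<le> d" using c(3)[of i] by linarith
      moreover have "r \<le> dist x y" using sep \<open>x \<in> U i \<inter> A\<close> \<open>y \<in> U i \<inter> B\<close> by auto
      ultimately show False using d by auto
    qed
    have "hausdorff_pre1 d A \<le> (\<Sum>i. ennreal (diameter (UA i)))"
    proof (rule pre_le_cover)
      show "A \<subseteq> (\<Union>i. UA i)"
      proof
        fix x assume "x \<in> A"
        then obtain i where "x \<in> U i" using c(1) by auto
        then have "U i \<inter> B = {}" using noA \<open>x \<in> A\<close> by blast
        then show "x \<in> (\<Union>i. UA i)" using \<open>x \<in> U i\<close> by (auto simp: UA_def)
      qed
      show "bounded (UA i)" for i using c(2)[of i] by (simp add: UA_def)
      show "diameter (UA i) \<le> d" for i using c(3)[of i] d by (simp add: UA_def)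
    qed
    moreover have "hausdorff_pre1 d B \<le> (\<Sum>i. ennreal (diameter (UB i)))"
    proof (rule pre_le_cover)
      show "B \<subseteq> (\<Union>i. UB i)"
      proof
        fix x assume "x \<in> B"
        then obtain i where "x \<in> U i" using c(1) by auto
        then show "x \<in> (\<Union>i. UB i)" using \<open>x \<in> B\<close> by (auto simp: UB_def)
      qed
      show "bounded (UB i)" for i using c(2)[of i] by (simp add: UB_def)
      show "diameter (UB i) \<le> d" for i using c(3)[of i] d by (simp add: UB_def)
    qed
    ultimately have "hausdorff_pre1 d A + hausdorff_pre1 d B \<le> (\<Sum>i. ennreal (diameter (UA i))) + (\<Sum>i. ennreal (diameter (UB i)))"
      by (rule add_mono)
    also have "\<dots> = (\<Sum>i. ennreal (diameter (UA i)) + ennreal (diameter (UB i)))"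
      by (simp add: suminf_add)
    also have "\<dots> = (\<Sum>i. ennreal (diameter (U i)))"
      by (rule suminf_cong) (auto simp: UA_def UB_def)
    finally show "hausdorff_pre1 d A + hausdorff_pre1 d B \<le> (\<Sum>i. ennreal (diameter (U i)))" .
  qed
  have "hausdorff_pre1 d1 A + hausdorff_pre1 d2 B \<le> H1 (A \<union> B)" if "d1 > 0" "d2 > 0" for d1 d2
  proof -
    define d where "d = min (min d1 d2) (r/2)"
    have d: "0 < d" "d < r" "d \<le> d1" "d \<le> d2" using that r by (auto simp: d_def)
    have m: "hausdorff_pre1 e X \<le> hausdorff_pre1 e' X" if "e' \<le> e" for e e' and X :: "'a set"
    proof (rule le_pre)
      fix U :: "nat \<Rightarrow> 'a set"
      assume c: "X \<subseteq> (\<Union>i. U i)" "\<And>i. bounded (U i)" "\<And>i. diameter (U i) \<le> e'"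
      show "hausdorff_pre1 e X \<le> (\<Sum>i. ennreal (diameter (U i)))"
        by (rule pre_le_cover[OF c(1,2)]) (use c(3) that in \<open>blast intro: order_trans\<close>)
    qed
    have "hausdorff_pre1 d1 A + hausdorff_pre1 d2 B \<le> hausdorff_pre1 d A + hausdorff_pre1 d B"
      by (intro add_mono m d)
    also have "\<dots> \<le> hausdorff_pre1 d (A \<union> B)" by (rule key) (use d in auto)
    also have "\<dots> \<le> H1 (A \<union> B)" by (rule pre_le_H1) (use d in auto)
    finally show ?thesis .
  qed
  then have "(SUP d1\<in>{0<..}. hausdorff_pre1 d1 A + H1 B) \<le> H1 (A \<union> B)"
    apply (intro SUP_least)
    apply (subst H1_def)
    apply (subst ennreal_SUP_add_right)
     apply auto[1]
    apply (rule SUP_least) by auto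
  then show ?thesis unfolding H1_def[of A]
    by (subst ennreal_SUP_add_left[symmetric]) auto
qed



lemma H1_sep_sum:
  fixes A :: "'i \<Rightarrow> 'a::metric_space set"
  assumes "finite K" "r > 0"
    and sep: "\<And>m m' x y. m \<in> K \<Longrightarrow> m' \<in> K \<Longrightarrow> m \<noteq> m' \<Longrightarrow> x \<in> A m \<Longrightarrow> y \<in> A m' \<Longrightarrow> r \<le> dist x y"
  shows "(\<Sum>m\<in>K. H1 (A m)) \<le> H1 (\<Union>m\<in>K. A m)"
  using assms(1) sep
proof (induction K rule: finite_induct)
  case empty
  then show ?case by simp
next
  case (insert m F)
  have "(\<Sum>m\<in>insert m F. H1 (A m)) = H1 (A m) + (\<Sum>m\<in>F. H1 (A m))"
    using insert.hyps by simp
  also have "\<dots> \<le> H1 (A m) + H1 (\<Union>m\<in>F. A m)"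
  proof (rule add_mono[OF order_refl], rule insert.IH)
    fix m1 m2 x y assume "m1 \<in> F" "m2 \<in> F" "m1 \<noteq> m2" "x \<in> A m1" "y \<in> A m2"
    then show "r \<le> dist x y" using insert.prems[of m1 m2 x y] by blast
  qed
  also have "\<dots> \<le> H1 (A m \<union> (\<Union>m\<in>F. A m))"
  proof (rule H1_sep_add[OF assms(2)])
    fix x y assume "x \<in> A m" "y \<in> (\<Union>m\<in>F. A m)"
    then obtain m' where "m' \<in> F" "y \<in> A m'" by auto
    moreover have "m \<noteq> m'" using insert.hyps(2) \<open>m' \<in> F\<close> by blast
    ultimately show "r \<le> dist x y" using insert.prems[of m m' x y] \<open>x \<in> A m\<close> by blast
  qed
  also have "\<dots> = H1 (\<Union>m\<in>insert m F. A m)" by simp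
  finally show ?case .
qed

lemma H1_connected_ball:
  fixes K :: "'a::metric_space set"
  assumes K: "connected K" and p: "p \<in> K" and q: "q \<in> K" and r: "r > 0" "r \<le> dist p q"
  shows "ennreal r \<le> H1 (K \<inter> ball p r)"
proof -
  have sub: "{0..<r} \<subseteq> dist p ` (K \<inter> ball p r)"
  proof
    fix s assume s: "s \<in> {0..<r}"
    have c: "connected (dist p ` K)"
      by (rule connected_continuous_image[OF _ K]) (intro continuous_intros)
    have "dist p p \<in> dist p ` K" "dist p q \<in> dist p ` K" using p q by auto
    moreover have "dist p p \<le> s" "s \<le> dist p q" using s r by auto
    ultimately have "s \<in> dist p ` K" using c unfolding connected_iff_interval by blast
    then obtain x where "x \<in> K" "s = dist p x" by auto
    then show "s \<in> dist p ` (K \<inter> ball p r)" using s by auto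
  qed
  have "ennreal r = emeasure lborel {0..<r}" using r by simp
  also have "\<dots> \<le> H1 {0..<r}" by (rule lborel_le_H1) simp
  also have "\<dots> \<le> H1 (dist p ` (K \<inter> ball p r))" by (rule H1_mono[OF sub])
  also have "\<dots> \<le> H1 (K \<inter> ball p r)"
    by (rule H1_lip_image) (metis abs_dist_diff_le dist_commute dist_real_def)
  finally show ?thesis .
qed

lemma floor_eq_close:
  fixes a b :: real
  assumes "\<lfloor>a\<rfloor> = \<lfloor>b\<rfloor>"
  shows "\<bar>a - b\<bar> < 1"
proof -
  have "of_int \<lfloor>a\<rfloor> \<le> a" "a < of_int \<lfloor>a\<rfloor> + 1" "of_int \<lfloor>b\<rfloor> \<le> b" "b < of_int \<lfloor>b\<rfloor> + 1"
    by (simp_all add: of_int_floor_le)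
  then show ?thesis using assms by linarith
qed

lemma abs_div_lt: "\<bar>(x::real) / g\<bar> < 1 \<Longrightarrow> g > 0 \<Longrightarrow> \<bar>x\<bar> < g"
  by simp

lemma card_sep_inj:
  fixes t :: "'i \<Rightarrow> real"
  assumes g: "g > 0"
    and rng: "\<And>m. m \<in> K \<Longrightarrow> lo \<le> t m"
    and sep: "\<And>m m'. m \<in> K \<Longrightarrow> m' \<in> K \<Longrightarrow> m \<noteq> m' \<Longrightarrow> g \<le> \<bar>t m - t m'\<bar>"
  shows "inj_on (\<lambda>m. nat \<lfloor>(t m - lo) / g\<rfloor>) K"
proof (rule inj_onI, rule ccontr)
  fix m m' assume mm: "m \<in> K" "m' \<in> K" "nat \<lfloor>(t m - lo) / g\<rfloor> = nat \<lfloor>(t m' - lo) / g\<rfloor>" "m \<noteq> m'"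
  have nn: "0 \<le> (t m - lo) / g" "0 \<le> (t m' - lo) / g" using rng[OF mm(1)] rng[OF mm(2)] g by simp_all
  have "int (nat \<lfloor>(t m - lo) / g\<rfloor>) = int (nat \<lfloor>(t m' - lo) / g\<rfloor>)" using mm(3) by simp
  then have "\<lfloor>(t m - lo) / g\<rfloor> = \<lfloor>(t m' - lo) / g\<rfloor>" using nn by simp
  then have "\<bar>(t m - lo) / g - (t m' - lo) / g\<bar> < 1" by (rule floor_eq_close)
  then have "\<bar>(t m - t m') / g\<bar> < 1" by (simp add: diff_divide_distrib)
  then have "\<bar>t m - t m'\<bar> < g" using g by (rule abs_div_lt)
  then show False using sep[OF mm(1) mm(2) mm(4)] by linarith
qed

lemma card_sep_le:
  fixes t :: "'i \<Rightarrow> real"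
  assumes K: "finite K" and g: "g > 0"
    and rng: "\<And>m. m \<in> K \<Longrightarrow> lo \<le> t m \<and> t m \<le> lo + L"
    and sep: "\<And>m m'. m \<in> K \<Longrightarrow> m' \<in> K \<Longrightarrow> m \<noteq> m' \<Longrightarrow> g \<le> \<bar>t m - t m'\<bar>"
    and L: "L \<ge> 0"
  shows "real (card K) \<le> L / g + 1"
proof -
  define f where "f m = nat \<lfloor>(t m - lo) / g\<rfloor>" for m
  have inj: "inj_on f K" unfolding f_def
    by (rule card_sep_inj[OF g]) (use rng sep in auto)
  have img: "f ` K \<subseteq> {0..nat \<lfloor>L / g\<rfloor>}"
  proof
    fix k assume "k \<in> f ` K"
    then obtain m where m: "m \<in> K" "k = f m" by auto
    have "(t m - lo) / g \<le> L / g" using rng[OF m(1)] g by (simp add: divide_right_mono)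
    then show "k \<in> {0..nat \<lfloor>L / g\<rfloor>}" using m unfolding f_def
      by (simp add: floor_mono nat_mono)
  qed
  have "card K \<le> card {0..nat \<lfloor>L / g\<rfloor>}" by (rule card_inj_on_le[OF inj img]) simp
  then have "card K \<le> nat \<lfloor>L / g\<rfloor> + 1" by simp
  then have "real (card K) \<le> real (nat \<lfloor>L / g\<rfloor>) + 1" by linarith
  also have "real (nat \<lfloor>L / g\<rfloor>) \<le> L / g" using L g by simp
  finally show ?thesis by simp
qed



definition piece :: "real \<times> real \<Rightarrow> real \<Rightarrow> real \<Rightarrow> (real \<times> real) set" where
  "piece c a b = (\<lambda>t. c + (t, 0)) ` {a..b}"

lemma piece_props:
  assumes "a \<le> b"
  shows "bounded (piece c a b)" "diameter (piece c a b) \<le> b - a"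
proof -
  have "compact (piece c a b)" unfolding piece_def
    by (intro compact_continuous_image continuous_intros) simp
  then show "bounded (piece c a b)" by (rule compact_imp_bounded)
  show "diameter (piece c a b) \<le> b - a"
  proof (rule diameter_le)
    show "piece c a b \<noteq> {} \<or> 0 \<le> b - a" using assms by simp
    fix x y assume "x \<in> piece c a b" "y \<in> piece c a b"
    then obtain s t where st: "s \<in> {a..b}" "t \<in> {a..b}" "x = c + (s, 0)" "y = c + (t, 0)"
      unfolding piece_def by auto
    have "norm (x - y) = \<bar>s - t\<bar>" using st by (simp add: norm_Pair)
    also have "\<dots> \<le> b - a" using st by auto
    finally show "norm (x - y) \<le> b - a" .
  qed
qed

lemma find_k:
  fixes t l :: real and K :: nat
  assumes "0 \<le> t" "t \<le> l" "l > 0" "K > 0"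
  shows "\<exists>k<K. real k * l / real K \<le> t \<and> t \<le> (real k + 1) * l / real K"
proof (cases "t = l")
  case True
  then show ?thesis using assms
    by (intro exI[of _ "K - 1"]) (auto simp: of_nat_diff field_simps)
next
  case False
  define k where "k = nat \<lfloor>t * K / l\<rfloor>"
  have q: "0 \<le> t * K / l" "t * K / l < K" using assms False by (auto simp: field_simps)
  have fk: "real k \<le> t * K / l" "t * K / l < real k + 1" unfolding k_def using q(1)
    by (simp_all add: of_int_floor_le)
  have "k < K" using fk q by linarith
  moreover have "real k * l / real K \<le> t" using fk(1) assms by (simp add: field_simps)
  moreover have "t \<le> (real k + 1) * l / real K" using fk(2) assms by (simp add: field_simps)
  ultimately show ?thesis by blast
qed



lemma H1_pieces:
  assumes S: "finite S" and l: "l > 0"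
  shows "H1 (\<Union>m\<in>S. piece (c m) 0 l) \<le> ennreal (real (card S) * l)"
proof (rule H1_le)
  fix d :: real assume d: "d > 0"
  obtain n :: nat where n: "l / d \<le> real n" using real_arch_simple by blast
  define K where "K = Suc n"
  have K0: "K > 0" unfolding K_def by simp
  have "l / d < real K" using n unfolding K_def by simp
  then have Kd: "l / real K \<le> d" using d K0 by (simp add: field_simps)
  obtain h where h: "bij_betw h {0..<card S} S" using ex_bij_betw_nat_finite[OF S] by blast
  define N where "N = card S"
  define U where "U i = (if i < N * K then piece (c (h (i div K))) (real (i mod K) * l / real K)
        ((real (i mod K) + 1) * l / real K) else {})" for i
  have ab: "real k * l / real K \<le> (real k + 1) * l / real K" for k
    using l K0 by (simp add: divide_right_mono)
  have len: "(real k + 1) * l / real K - real k * l / real K = l / real K" for k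
    by (simp add: algebra_simps add_divide_distrib)
  have Ub: "bounded (U i)" for i
    unfolding U_def using piece_props(1)[OF ab] by simp
  have Ud: "diameter (U i) \<le> l / real K" for i
  proof (cases "i < N * K")
    case True
    then show ?thesis unfolding U_def using piece_props(2)[OF ab, of "c (h (i div K))" "i mod K"]
      by (simp add: len)
  next
    case False
    then show ?thesis unfolding U_def using l K0 by simp
  qed
  have cover: "(\<Union>m\<in>S. piece (c m) 0 l) \<subseteq> (\<Union>i. U i)"
  proof
    fix x assume "x \<in> (\<Union>m\<in>S. piece (c m) 0 l)"
    then obtain m t where mt: "m \<in> S" "t \<in> {0..l}" "x = c m + (t, 0)" unfolding piece_def by auto
    have "m \<in> h ` {0..<N}" using h mt(1) unfolding N_def bij_betw_def by simp
    then obtain j where j: "j < N" "h j = m" by auto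
    obtain k where k: "k < K" "real k * l / real K \<le> t" "t \<le> (real k + 1) * l / real K"
      using find_k[of t l K] mt(2) l K0 by auto
    define i where "i = j * K + k"
    have "i < N * K"
    proof -
      have "i < j * K + K" using k(1) unfolding i_def by simp
      also have "\<dots> = (j + 1) * K" by simp
      also have "\<dots> \<le> N * K" using j(1) by (intro mult_right_mono) auto
      finally show ?thesis .
    qed
    moreover have "i div K = j" "i mod K = k" unfolding i_def using k(1) by auto
    ultimately have "x \<in> U i" unfolding U_def piece_def using mt j k by auto
    then show "x \<in> (\<Union>i. U i)" by auto
  qed
  have "hausdorff_pre1 d (\<Union>m\<in>S. piece (c m) 0 l) \<le> (\<Sum>i. ennreal (diameter (U i)))"
    by (rule pre_le_cover[OF cover Ub]) (use Ud Kd in \<open>blast intro: order_trans\<close>)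
  also have "\<dots> = (\<Sum>i<N*K. ennreal (diameter (U i)))"
    by (rule suminf_finite) (auto simp: U_def)
  also have "\<dots> \<le> (\<Sum>i<N*K. ennreal (l / real K))"
    by (rule sum_mono) (use Ud in \<open>simp add: ennreal_leI\<close>)
  also have "\<dots> = of_nat (N * K) * ennreal (l / real K)" by simp
  also have "\<dots> = ennreal (real (N * K)) * ennreal (l / real K)"
    by (simp only: ennreal_of_nat_eq_real_of_nat)
  also have "\<dots> = ennreal (real (N * K) * (l / real K))"
    by (rule ennreal_mult[symmetric]) (use l in auto)
  also have "real (N * K) * (l / real K) = real (card S) * l"
    unfolding N_def using K0 by simp
  finally show "hausdorff_pre1 d (\<Union>m\<in>S. piece (c m) 0 l) \<le> ennreal (real (card S) * l)" .
qed



definition cc :: "nat \<Rightarrow> nat \<Rightarrow> real \<times> real" where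
  "cc n m = (real m / (real n)\<^sup>2, real (m mod n) / real n)"

definition PP :: "nat \<Rightarrow> nat \<Rightarrow> (real \<times> real) set" where
  "PP n m = piece (cc n m) 0 (1 / (real n)\<^sup>2)"

definition EE :: "nat \<Rightarrow> (real \<times> real) set" where
  "EE n = (\<Union>m\<in>{..<n\<^sup>2}. PP n m)"

lemma PP_mem: "x \<in> PP n m \<longleftrightarrow> (\<exists>s. 0 \<le> s \<and> s \<le> 1 / (real n)\<^sup>2 \<and>
    x = (real m / (real n)\<^sup>2 + s, real (m mod n) / real n))"
  unfolding PP_def piece_def cc_def by auto

lemma compact_EE: "compact (EE n)"
  unfolding EE_def PP_def piece_def
  by (intro compact_UN compact_continuous_image continuous_intros) auto

lemma EE_sub_box:
  assumes n: "n \<ge> 2"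
  shows "EE n \<subseteq> cbox (0,0) (1,1)"
proof
  fix x assume "x \<in> EE n"
  then obtain m where m0: "m < n\<^sup>2" "x \<in> PP n m" unfolding EE_def by auto
  then obtain s where m: "m < n\<^sup>2" "0 \<le> s" "s \<le> 1 / (real n)\<^sup>2"
    "x = (real m / (real n)\<^sup>2 + s, real (m mod n) / real n)"
    unfolding PP_mem by auto
  have n0: "real n > 0" using n by simp
  have "real m + 1 \<le> (real n)\<^sup>2" using m(1) by (metis of_nat_less_iff of_nat_power of_nat_Suc Suc_leI of_nat_le_iff add.commute)
  then have "real m / (real n)\<^sup>2 + 1 / (real n)\<^sup>2 \<le> 1" using n0 by (simp add: field_simps)
  then have 1: "real m / (real n)\<^sup>2 + s \<le> 1" using m(3) by linarith
  have 2: "0 \<le> real m / (real n)\<^sup>2 + s" using m(2) by simp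
  have "m mod n < n" using n by simp
  then have 3: "real (m mod n) / real n \<le> 1" using n0 by simp
  show "x \<in> cbox (0,0) (1,1)" using 1 2 3 m(4) by (simp add: cbox_Pair_eq)
qed

lemma H1_EE_le:
  assumes n: "n \<ge> 2"
  shows "H1 (EE n) \<le> 1"
proof -
  have "H1 (EE n) \<le> ennreal (real (card {..<n\<^sup>2}) * (1 / (real n)\<^sup>2))"
    unfolding EE_def PP_def by (rule H1_pieces) (use n in auto)
  also have "real (card {..<n\<^sup>2}) * (1 / (real n)\<^sup>2) = 1" using n by simp
  finally show ?thesis by simp
qed

lemma H1_EE_ge:
  assumes n: "n \<ge> 2"
  shows "1 \<le> H1 (EE n)"
proof -
  have n0: "real n > 0" using n by simp
  have sub: "{0..1} \<subseteq> fst ` EE n"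
  proof
    fix x :: real assume x: "x \<in> {0..1}"
    obtain k where k: "k < n\<^sup>2" "real k * 1 / real (n\<^sup>2) \<le> x" "x \<le> (real k + 1) * 1 / real (n\<^sup>2)"
      using find_k[of x 1 "n\<^sup>2"] x n by auto
    define s where "s = x - real k / (real n)\<^sup>2"
    have s: "0 \<le> s" "s \<le> 1 / (real n)\<^sup>2" using k unfolding s_def by (auto simp: add_divide_distrib)
    have "(x, real (k mod n) / real n) \<in> PP n k" unfolding PP_mem
      by (rule exI[of _ s]) (use s in \<open>auto simp: s_def\<close>)
    then show "x \<in> fst ` EE n" unfolding EE_def using k(1) by force
  qed
  have "1 = emeasure lborel {0..1::real}" by simp
  also have "\<dots> \<le> H1 {0..1::real}" by (rule lborel_le_H1) simp
  also have "\<dots> \<le> H1 (fst ` EE n)" by (rule H1_mono[OF sub])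
  also have "\<dots> \<le> H1 (EE n)" by (rule H1_lip_image) (rule dist_fst_le)
  finally show ?thesis .
qed

lemma rect_EE:
  assumes n: "n \<ge> 2"
  shows "rectifiable_set (EE n)"
proof -
  define f where "f j t = (t, real j / real n)" for j :: nat and t :: real
  have L: "\<exists>L. lipschitz_on L UNIV (f j)" for j
    by (rule exI[of _ 1], rule lipschitz_onI) (auto simp: f_def dist_Pair_Pair)
  have "EE n \<subseteq> (\<Union>j. range (f j))"
  proof
    fix x assume "x \<in> EE n"
    then obtain m where "x \<in> PP n m" unfolding EE_def by auto
    then obtain s where "x = (real m / (real n)\<^sup>2 + s, real (m mod n) / real n)"
      unfolding PP_mem by auto
    then have "x = f (m mod n) (real m / (real n)\<^sup>2 + s)" by (simp add: f_def)
    then show "x \<in> (\<Union>j. range (f j))" by blast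
  qed
  then have eq: "EE n - (\<Union>j. range (f j)) = {}" by blast
  have H0: "H1 ({} :: (real \<times> real) set) = 0"
  proof -
    have "H1 (\<Union>m\<in>({}::nat set). piece ((\<lambda>m. (0::real\<times>real)) m) 0 1) \<le> ennreal (real (card ({}::nat set)) * 1)"
      by (rule H1_pieces) auto
    then show ?thesis by simp
  qed
  have "H1 (EE n - (\<Union>j. range (f j))) = 0" unfolding eq by (rule H0)
  then show ?thesis unfolding rectifiable_set_def using L by blast
qed

lemma mod_eq_far:
  fixes m m' n :: nat
  assumes "m \<noteq> m'" "m mod n = m' mod n"
  shows "real n \<le> \<bar>real m - real m'\<bar>"
proof -
  have "int m mod int n = int m' mod int n" using assms(2) by (metis of_nat_mod)
  then have "int n dvd (int m - int m')" by (simp add: mod_eq_dvd_iff)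
  moreover have "int m - int m' \<noteq> 0" using assms(1) by simp
  ultimately have "\<bar>int n\<bar> \<le> \<bar>int m - int m'\<bar>" by (rule dvd_imp_le_int[rotated])
  then have "real_of_int \<bar>int n\<bar> \<le> real_of_int \<bar>int m - int m'\<bar>" by (simp only: of_int_le_iff)
  then show ?thesis by simp
qed

lemma sep_fst:
  fixes n :: nat and a b s s' :: real
  assumes n: "n \<ge> 2" and ab: "real n \<le> \<bar>a - b\<bar>"
    and s: "0 \<le> s" "s \<le> 1 / (real n)\<^sup>2" "0 \<le> s'" "s' \<le> 1 / (real n)\<^sup>2"
  shows "1 / (2 * real n) \<le> \<bar>(a / (real n)\<^sup>2 + s) - (b / (real n)\<^sup>2 + s')\<bar>"
proof -
  have n0: "real n \<ge> 2" using n by simp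
  have "\<bar>a / (real n)\<^sup>2 - b / (real n)\<^sup>2\<bar> = \<bar>a - b\<bar> / (real n)\<^sup>2"
    by (simp add: diff_divide_distrib[symmetric] abs_divide)
  also have "\<dots> \<ge> real n / (real n)\<^sup>2" using ab by (simp add: divide_right_mono)
  finally have 1: "1 / real n \<le> \<bar>a / (real n)\<^sup>2 - b / (real n)\<^sup>2\<bar>" using n0 by (simp add: power2_eq_square)
  have 2: "1 / (real n)\<^sup>2 \<le> 1 / (2 * real n)" using n0 by (simp add: field_simps power2_eq_square)
  have 3: "1 / (2 * real n) = 1 / real n - 1 / (2 * real n)" using n0 by (simp add: field_simps)
  show ?thesis using 1 2 3 s by linarith
qed

lemma sep_snd:
  fixes n a b :: nat
  assumes n: "n \<ge> 2" and ab: "a \<noteq> b"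
  shows "1 / (2 * real n) \<le> \<bar>real a / real n - real b / real n\<bar>"
proof -
  have n0: "real n \<ge> 2" using n by simp
  have "1 \<le> \<bar>real a - real b\<bar>" using ab by linarith
  then have "1 / real n \<le> \<bar>real a - real b\<bar> / real n" using n0 by (simp add: divide_right_mono)
  also have "\<dots> = \<bar>real a / real n - real b / real n\<bar>"
    by (simp add: diff_divide_distrib[symmetric] abs_divide)
  finally show ?thesis using n0 by (simp add: field_simps)
qed

lemma PP_sep:
  assumes n: "n \<ge> 2" and mm: "m \<noteq> m'" and x: "x \<in> PP n m" and y: "y \<in> PP n m'"
  shows "1 / (2 * real n) \<le> dist x y"
proof -
  obtain s s' where s: "0 \<le> s" "s \<le> 1 / (real n)\<^sup>2" "x = (real m / (real n)\<^sup>2 + s, real (m mod n) / real n)"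
    and s': "0 \<le> s'" "s' \<le> 1 / (real n)\<^sup>2" "y = (real m' / (real n)\<^sup>2 + s', real (m' mod n) / real n)"
    using x y unfolding PP_mem by blast
  show ?thesis
  proof (cases "m mod n = m' mod n")
    case True
    have "1 / (2 * real n) \<le> \<bar>(real m / (real n)\<^sup>2 + s) - (real m' / (real n)\<^sup>2 + s')\<bar>"
      by (rule sep_fst[OF n mod_eq_far[OF mm True] s(1,2) s'(1,2)])
    also have "\<dots> = dist (fst x) (fst y)" using s s' by (simp add: dist_real_def)
    also have "\<dots> \<le> dist x y" by (rule dist_fst_le)
    finally show ?thesis .
  next
    case False
    have "1 / (2 * real n) \<le> \<bar>real (m mod n) / real n - real (m' mod n) / real n\<bar>"
      by (rule sep_snd[OF n False])
    also have "\<dots> = dist (snd x) (snd y)" using s s' by (simp add: dist_real_def)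
    also have "\<dots> \<le> dist x y" by (rule dist_snd_le)
    finally show ?thesis .
  qed
qed



lemma H1_hit_le:
  assumes n: "n \<ge> 2" and K: "K = {m \<in> {..<n\<^sup>2}. G \<inter> PP n m \<noteq> {}}"
  shows "H1 (G \<inter> EE n) \<le> ennreal (real (card K) / (real n)\<^sup>2)" "finite K"
proof -
  show fK: "finite K" unfolding K by simp
  have "G \<inter> EE n \<subseteq> (\<Union>m\<in>K. piece (cc n m) 0 (1 / (real n)\<^sup>2))"
    unfolding K EE_def PP_def by blast
  then have "H1 (G \<inter> EE n) \<le> H1 (\<Union>m\<in>K. piece (cc n m) 0 (1 / (real n)\<^sup>2))" by (rule H1_mono)
  also have "\<dots> \<le> ennreal (real (card K) * (1 / (real n)\<^sup>2))"
    by (rule H1_pieces[OF fK]) (use n in simp)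
  finally show "H1 (G \<inter> EE n) \<le> ennreal (real (card K) / (real n)\<^sup>2)" by simp
qed

lemma curve_connected: "is_curve_set G \<Longrightarrow> connected G"
  unfolding is_curve_set_def using connected_continuous_image connected_Icc by blast

lemma curve_bound:
  assumes n: "n \<ge> 2" and \<alpha>: "2 / (real n)\<^sup>2 \<le> \<alpha>" and G: "is_curve_set G"
    and h: "ennreal \<alpha> \<le> H1 (G \<inter> EE n)"
  shows "ennreal (1/8 * \<alpha> * real n) \<le> H1 G"
proof -
  define K where "K = {m \<in> {..<n\<^sup>2}. G \<inter> PP n m \<noteq> {}}"
  have fK: "finite K" and hK: "H1 (G \<inter> EE n) \<le> ennreal (real (card K) / (real n)\<^sup>2)"
    using H1_hit_le[OF n K_def] by auto
  have n0: "real n \<ge> 2" using n by simp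
  have "ennreal \<alpha> \<le> ennreal (real (card K) / (real n)\<^sup>2)" using h hK by (rule order_trans)
  then have a1: "\<alpha> \<le> real (card K) / (real n)\<^sup>2"
    by (subst (asm) ennreal_le_iff) (use n0 in auto)
  then have a2: "\<alpha> * (real n)\<^sup>2 \<le> real (card K)" using n0 by (simp add: field_simps)
  have "2 \<le> \<alpha> * (real n)\<^sup>2" using \<alpha> n0 by (simp add: field_simps)
  then have cK: "2 \<le> card K" using a2 by linarith
  define p where "p m = (SOME x. x \<in> G \<inter> PP n m)" for m
  have p: "p m \<in> G \<inter> PP n m" if "m \<in> K" for m
  proof -
    have "\<exists>x. x \<in> G \<inter> PP n m" using that unfolding K_def by auto
    then show ?thesis unfolding p_def by (rule someI_ex)
  qed
  define r where "r = 1 / (8 * real n)"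
  have r0: "r > 0" using n0 by (simp add: r_def)
  have psep: "1 / (2 * real n) \<le> dist (p m) (p m')" if "m \<in> K" "m' \<in> K" "m \<noteq> m'" for m m'
    using PP_sep[OF n that(3)] p[OF that(1)] p[OF that(2)] by blast
  have rle: "r \<le> 1 / (2 * real n)" using n0 by (simp add: r_def field_simps)
  have ball_ge: "ennreal r \<le> H1 (G \<inter> ball (p m) r)" if m: "m \<in> K" for m
  proof -
    have "\<not> K \<subseteq> {m}" using cK card_mono[of "{m}" K] by auto
    then obtain m' where m': "m' \<in> K" "m' \<noteq> m" by auto
    have "1 / (2 * real n) \<le> dist (p m) (p m')" using psep[OF m m'(1)] m'(2) by auto
    then have d: "r \<le> dist (p m) (p m')" using rle by linarith
    have pm: "p m \<in> G" "p m' \<in> G" using p[OF m] p[OF m'(1)] by auto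
    show ?thesis by (rule H1_connected_ball[OF curve_connected[OF G] pm r0 d])
  qed
  have bsep: "1 / (4 * real n) \<le> dist x y"
    if "m \<in> K" "m' \<in> K" "m \<noteq> m'" "x \<in> G \<inter> ball (p m) r" "y \<in> G \<inter> ball (p m') r" for m m' x y
  proof -
    have "dist (p m) (p m') \<le> dist (p m) x + dist x y + dist y (p m')"
      using dist_triangle[of "p m" "p m'" x] dist_triangle[of x "p m'" y] by linarith
    moreover have "dist (p m) x < r" "dist y (p m') < r" using that(4,5) by (auto simp: dist_commute)
    moreover have "1 / (2 * real n) \<le> dist (p m) (p m')" by (rule psep[OF that(1-3)])
    moreover have "1 / (4 * real n) = 1 / (2 * real n) - 2 * r" using n0 by (simp add: r_def field_simps)
    ultimately show ?thesis by linarith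
  qed
  have "ennreal (real (card K) * r) = (\<Sum>m\<in>K. ennreal r)"
    using r0 by (simp add: ennreal_mult ennreal_of_nat_eq_real_of_nat)
  also have "\<dots> \<le> (\<Sum>m\<in>K. H1 (G \<inter> ball (p m) r))" by (rule sum_mono) (rule ball_ge)
  also have "\<dots> \<le> H1 (\<Union>m\<in>K. G \<inter> ball (p m) r)"
    by (rule H1_sep_sum[OF fK, of "1 / (4 * real n)"]) (use n0 bsep in auto)
  also have "\<dots> \<le> H1 G" by (rule H1_mono) auto
  finally have 1: "ennreal (real (card K) * r) \<le> H1 G" .
  have "1/8 * \<alpha> * real n \<le> real (card K) * r"
  proof -
    have "1/8 * \<alpha> * real n = \<alpha> * (real n)\<^sup>2 * (1 / (8 * real n))" using n0 by (simp add: field_simps power2_eq_square)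
    also have "\<dots> \<le> real (card K) * (1 / (8 * real n))" using a2 n0 by (intro mult_right_mono) auto
    finally show ?thesis by (simp add: r_def)
  qed
  then have "ennreal (1/8 * \<alpha> * real n) \<le> ennreal (real (card K) * r)" by (rule ennreal_leI)
  then show ?thesis using 1 by (rule order_trans)
qed



lemma norm_box_le2:
  assumes "q \<in> cbox (0::real,0::real) (1,1)"
  shows "norm q \<le> 2"
proof -
  obtain a b where q: "q = (a, b)" by (cases q)
  have ab: "0 \<le> a" "a \<le> 1" "0 \<le> b" "b \<le> 1" using assms q by (auto simp: cbox_Pair_eq)
  have "norm q = sqrt (a\<^sup>2 + b\<^sup>2)" using q by (simp add: norm_Pair)
  also have "\<dots> \<le> sqrt 4"
  proof (rule real_sqrt_le_mono)
    have "a\<^sup>2 \<le> 1" "b\<^sup>2 \<le> 1" using ab by (auto simp: power_le_one)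
    then show "a\<^sup>2 + b\<^sup>2 \<le> 4" by linarith
  qed
  also have "sqrt 4 = (2::real)" by (simp add: real_sqrt_eq_iff)
  finally show ?thesis .
qed

lemma graph_param:
  fixes u v :: "real \<times> real"
  assumes "norm u = 1" "inner u v = 0"
  shows "inner (t *\<^sub>R u + s *\<^sub>R v) u = t"
proof -
  have "inner u u = 1" using assms(1) by (simp add: dot_square_norm)
  moreover have "inner v u = 0" using assms(2) by (simp add: inner_commute)
  ultimately show ?thesis by (simp add: inner_add_left)
qed

lemma graph_dist:
  fixes u v :: "real \<times> real"
  assumes "norm u = 1" "norm v = 1" "M \<ge> 1" "\<bar>s - s'\<bar> \<le> M * \<bar>t - t'\<bar>"
  shows "dist (t *\<^sub>R u + s *\<^sub>R v) (t' *\<^sub>R u + s' *\<^sub>R v) \<le> 2 * M * \<bar>t - t'\<bar>"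
proof -
  have "dist (t *\<^sub>R u + s *\<^sub>R v) (t' *\<^sub>R u + s' *\<^sub>R v) = norm ((t - t') *\<^sub>R u + (s - s') *\<^sub>R v)"
    by (simp add: dist_norm algebra_simps)
  also have "\<dots> \<le> norm ((t - t') *\<^sub>R u) + norm ((s - s') *\<^sub>R v)" by (rule norm_triangle_ineq)
  also have "\<dots> = \<bar>t - t'\<bar> + \<bar>s - s'\<bar>" using assms by simp
  also have "\<dots> \<le> 2 * M * \<bar>t - t'\<bar>"
  proof -
    have "1 * \<bar>t - t'\<bar> \<le> M * \<bar>t - t'\<bar>" using assms(3) by (intro mult_right_mono) auto
    moreover have "2 * M * \<bar>t - t'\<bar> = M * \<bar>t - t'\<bar> + M * \<bar>t - t'\<bar>" by simp
    ultimately show ?thesis using assms(4) by linarith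
  qed
  finally show ?thesis .
qed

lemma graph_bound:
  assumes n: "n \<ge> 2" and M: "M \<ge> 1" and G: "lipschitz_graph M G"
  shows "H1 (G \<inter> EE n) \<le> ennreal (17 * M / real n)"
proof -
  obtain u v A f where uv: "norm u = 1" "norm v = 1" "inner u v = 0" and lf: "lipschitz_on M A f"
    and Gd: "G = (\<lambda>t. t *\<^sub>R u + f t *\<^sub>R v) ` A"
    using G unfolding lipschitz_graph_def by blast
  define K where "K = {m \<in> {..<n\<^sup>2}. G \<inter> PP n m \<noteq> {}}"
  have fK: "finite K" and hK: "H1 (G \<inter> EE n) \<le> ennreal (real (card K) / (real n)\<^sup>2)"
    using H1_hit_le[OF n K_def] by auto
  have n0: "real n \<ge> 2" using n by simp
  define tt where "tt m = (SOME t. t \<in> A \<and> t *\<^sub>R u + f t *\<^sub>R v \<in> PP n m)" for m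
  have tt: "tt m \<in> A \<and> tt m *\<^sub>R u + f (tt m) *\<^sub>R v \<in> PP n m" if "m \<in> K" for m
  proof -
    have "\<exists>t. t \<in> A \<and> t *\<^sub>R u + f t *\<^sub>R v \<in> PP n m" using that unfolding K_def Gd by auto
    then show ?thesis unfolding tt_def by (rule someI_ex)
  qed
  have rng: "-2 \<le> tt m \<and> tt m \<le> -2 + 4" if "m \<in> K" for m
  proof -
    define q where "q = tt m *\<^sub>R u + f (tt m) *\<^sub>R v"
    have "q \<in> EE n" using tt[OF that] that unfolding q_def K_def EE_def by auto
    then have "norm q \<le> 2" using EE_sub_box[OF n] norm_box_le2 by blast
    moreover have "\<bar>inner q u\<bar> \<le> norm q * norm u" by (rule Cauchy_Schwarz_ineq2)
    moreover have "inner q u = tt m" unfolding q_def by (rule graph_param[OF uv(1,3)])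
    ultimately show ?thesis using uv(1) by auto
  qed
  have g0: "1 / (4 * M * real n) > 0" using M n0 by simp
  have sep: "1 / (4 * M * real n) \<le> \<bar>tt m - tt m'\<bar>" if "m \<in> K" "m' \<in> K" "m \<noteq> m'" for m m'
  proof -
    have "1 / (2 * real n) \<le> dist (tt m *\<^sub>R u + f (tt m) *\<^sub>R v) (tt m' *\<^sub>R u + f (tt m') *\<^sub>R v)"
      by (rule PP_sep[OF n that(3)]) (use tt[OF that(1)] tt[OF that(2)] in auto)
    also have "\<dots> \<le> 2 * M * \<bar>tt m - tt m'\<bar>"
    proof (rule graph_dist[OF uv(1,2) M])
      have "dist (f (tt m)) (f (tt m')) \<le> M * dist (tt m) (tt m')"
        by (rule lipschitz_onD[OF lf]) (use tt[OF that(1)] tt[OF that(2)] in auto)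
      then show "\<bar>f (tt m) - f (tt m')\<bar> \<le> M * \<bar>tt m - tt m'\<bar>" by (simp add: dist_real_def)
    qed
    finally have "1 / (2 * real n) \<le> 2 * M * \<bar>tt m - tt m'\<bar>" .
    then have "(1 / (2 * real n)) / (2 * M) \<le> (2 * M * \<bar>tt m - tt m'\<bar>) / (2 * M)"
      using M by (intro divide_right_mono) auto
    moreover have "(1 / (2 * real n)) / (2 * M) = 1 / (4 * M * real n)" by simp
    moreover have "(2 * M * \<bar>tt m - tt m'\<bar>) / (2 * M) = \<bar>tt m - tt m'\<bar>" using M by simp
    ultimately show ?thesis by linarith
  qed
  have cK: "real (card K) \<le> 4 / (1 / (4 * M * real n)) + 1"
    by (rule card_sep_le[OF fK g0 rng sep]) auto
  then have cK': "real (card K) \<le> 16 * M * real n + 1" by simp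
  have "real (card K) / (real n)\<^sup>2 \<le> (16 * M * real n + 1) / (real n)\<^sup>2"
    using cK' by (simp add: divide_right_mono)
  also have "\<dots> \<le> 17 * M / real n"
  proof -
    have "1 * 1 \<le> M * real n" using M n0 by (intro mult_mono) auto
    then have "16 * M * real n + 1 \<le> 17 * M * real n" by linarith
    then have "(16 * M * real n + 1) / (real n)\<^sup>2 \<le> (17 * M * real n) / (real n)\<^sup>2"
      by (simp add: divide_right_mono)
    also have "\<dots> = 17 * M / real n" using n0 by (simp add: power2_eq_square)
    finally show ?thesis .
  qed
  finally have "real (card K) / (real n)\<^sup>2 \<le> 17 * M / real n" .
  then have "ennreal (real (card K) / (real n)\<^sup>2) \<le> ennreal (17 * M / real n)" by (rule ennreal_leI)
  with hK show ?thesis by (rule order_trans)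
qed



lemma arctan_lip:
  fixes x y :: real
  assumes "x \<le> y"
  shows "arctan y - arctan x \<le> y - x"
proof (cases "x = y")
  case True then show ?thesis by simp
next
  case False
  then have xy: "x < y" using assms by simp
  obtain z where z: "z > x" "z < y" "arctan y - arctan x = (y - x) * inverse (1 + z\<^sup>2)"
    using MVT2[OF xy, of arctan "\<lambda>z. inverse (1 + z\<^sup>2)"] DERIV_arctan by blast
  have "inverse (1 + z\<^sup>2) \<le> inverse 1" by (rule le_imp_inverse_le) auto
  then have "inverse (1 + z\<^sup>2) \<le> 1" by simp
  then have "(y - x) * inverse (1 + z\<^sup>2) \<le> (y - x) * 1" using xy by (intro mult_left_mono) auto
  then show ?thesis using z(3) by simp
qed

definition JJ :: "nat \<Rightarrow> nat" where "JJ n = n div 24 + 1"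

definition lo :: "nat \<Rightarrow> int \<Rightarrow> int \<Rightarrow> real" where
  "lo n b a = (- (real_of_int a * real n + real_of_int b) - 1) / (real_of_int b * real n)"

definition hi :: "nat \<Rightarrow> int \<Rightarrow> int \<Rightarrow> real" where
  "hi n b a = (- (real_of_int a * real n + real_of_int b) + 1) / (real_of_int b * real n)"

definition Qs :: "nat \<Rightarrow> (int \<times> int) set" where
  "Qs n = Sigma {1..<int (JJ n)} (\<lambda>b. {-b-1..0})"

definition Bad :: "nat \<Rightarrow> real set" where
  "Bad n = (\<Union>p\<in>Qs n. {arctan (lo n (fst p) (snd p)) .. arctan (hi n (fst p) (snd p))})"

definition Good :: "nat \<Rightarrow> real set" where
  "Good n = {0..pi/4} - Bad n"

lemma JJ_le: "n \<ge> 2 \<Longrightarrow> JJ n \<le> n" unfolding JJ_def by linarith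

lemma tan_range:
  assumes "\<theta> \<in> {0..pi/4}"
  shows "0 \<le> tan \<theta>" "tan \<theta> \<le> 1" "- (pi/2) < \<theta>" "\<theta> < pi/2"
proof -
  have a: "0 \<le> \<theta>" "\<theta> \<le> pi/4" using assms by auto
  have p: "0 < pi" by (rule pi_gt_zero)
  show h3: "- (pi/2) < \<theta>" using a p by linarith
  show h4: "\<theta> < pi/2" using a p by linarith
  have "tan 0 \<le> tan \<theta>" by (rule tan_mono_le) (use a h4 p in linarith)+
  then show "0 \<le> tan \<theta>" by simp
  have "tan \<theta> \<le> tan (pi/4)" by (rule tan_mono_le) (use a h3 p in linarith)+
  then show "tan \<theta> \<le> 1" by (simp add: tan_45)
qed

lemma key_A_range:
  fixes A B n t :: real
  assumes n: "n \<ge> 2" and B: "1 \<le> B" "B + 1 \<le> n" and t: "0 \<le> t" "t \<le> 1"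
    and x: "\<bar>A * n + B + B * n * t\<bar> < 1"
  shows "A < 1" "- B - 2 < A"
proof -
  have Bnt: "0 \<le> B * n * t" "B * n * t \<le> B * n" using B n t by (simp_all add: mult_left_le)
  show "A < 1"
  proof (rule ccontr)
    assume "\<not> A < 1"
    then have "1 * n \<le> A * n" using n by (intro mult_right_mono) auto
    then show False using x Bnt B n by linarith
  qed
  show "- B - 2 < A"
  proof (rule ccontr)
    assume "\<not> - B - 2 < A"
    then have "A * n \<le> (- B - 2) * n" using n by (intro mult_right_mono) auto
    moreover have "(- B - 2) * n + B * n = - 2 * n" by (simp add: algebra_simps)
    ultimately show False using x Bnt B n by linarith
  qed
qed

lemma key_lo_hi:
  fixes A B n t :: real
  assumes Bn: "B * n > 0" and x: "\<bar>A * n + B + B * n * t\<bar> < 1"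
  shows "(- (A * n + B) - 1) / (B * n) < t" "t < (- (A * n + B) + 1) / (B * n)"
proof -
  have "- (A * n + B) - 1 < t * (B * n)" using x by (simp add: algebra_simps abs_less_iff)
  then show "(- (A * n + B) - 1) / (B * n) < t" using Bn by (simp add: pos_divide_less_eq)
  have "t * (B * n) < - (A * n + B) + 1" using x by (simp add: algebra_simps abs_less_iff)
  then show "t < (- (A * n + B) + 1) / (B * n)" using Bn by (simp add: pos_less_divide_eq)
qed

lemma key_tan:
  assumes n: "n \<ge> 2" and th: "\<theta> \<in> Good n" and B: "0 < B" "B < int (JJ n)"
    and x: "\<bar>real_of_int A * real n + real_of_int B + real_of_int B * real n * tan \<theta>\<bar> < 1"
  shows False
proof -
  have th0: "\<theta> \<in> {0..pi/4}" "\<theta> \<notin> Bad n" using th unfolding Good_def by auto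
  note tr = tan_range[OF th0(1)]
  have n0: "real n \<ge> 2" using n by simp
  have B1: "1 \<le> real_of_int B" using B by simp
  have "B + 1 \<le> int n" using B JJ_le[OF n] by linarith
  then have B2: "real_of_int B + 1 \<le> real n" by (metis of_int_le_iff of_int_of_nat_eq of_int_add of_int_1)
  have Ar: "real_of_int A < 1" "- real_of_int B - 2 < real_of_int A"
    using key_A_range[OF n0 B1 B2 tr(1,2) x] by auto
  have "A \<le> 0" "-B-1 \<le> A" using Ar by linarith+
  then have Q: "(B, A) \<in> Qs n" unfolding Qs_def using B by auto
  have Bn: "real_of_int B * real n > 0" using B n0 by simp
  have "lo n B A < tan \<theta>" "tan \<theta> < hi n B A"
    using key_lo_hi[OF Bn x] unfolding lo_def hi_def by auto
  then have "arctan (lo n B A) < arctan (tan \<theta>)" "arctan (tan \<theta>) < arctan (hi n B A)"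
    by (auto intro: arctan_monotone)
  then have "arctan (lo n B A) \<le> \<theta>" "\<theta> \<le> arctan (hi n B A)"
    using arctan_tan[OF tr(3,4)] by auto
  then have "\<theta> \<in> Bad n" using Q unfolding Bad_def by force
  then show False using th0(2) by simp
qed

lemma good_sep:
  assumes n: "n \<ge> 2" and th: "\<theta> \<in> Good n"
    and ij: "i < n" "i' < n" "j < JJ n" "j' < JJ n" "(i, j) \<noteq> (i', j')"
  shows "1 \<le> \<bar>(real i - real i') * real n + (real j - real j') + (real j - real j') * real n * tan \<theta>\<bar>"
proof -
  define A where "A = int i - int i'"
  define B where "B = int j - int j'"
  have eq: "(real i - real i') * real n + (real j - real j') + (real j - real j') * real n * tan \<theta>
      = real_of_int A * real n + real_of_int B + real_of_int B * real n * tan \<theta>"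
    unfolding A_def B_def by simp
  have n0: "real n \<ge> 2" using n by simp
  consider "B = 0" | "B > 0" | "B < 0" by linarith
  then show ?thesis
  proof cases
    case 1
    then have "A \<noteq> 0" using ij(5) unfolding A_def B_def by auto
    then have "1 \<le> \<bar>real_of_int A\<bar>" by linarith
    then have "1 * 1 \<le> \<bar>real_of_int A\<bar> * real n" using n0 by (intro mult_mono) auto
    then show ?thesis unfolding eq using 1 by (simp add: abs_mult)
  next
    case 2
    have "B < int (JJ n)" using ij(3) unfolding B_def by linarith
    then show ?thesis unfolding eq using key_tan[OF n th 2, of A] by force
  next
    case 3
    have "- B < int (JJ n)" using ij(4) unfolding B_def by linarith
    moreover have "- B > 0" using 3 by simp
    ultimately have "\<not> \<bar>real_of_int (-A) * real n + real_of_int (-B) + real_of_int (-B) * real n * tan \<theta>\<bar> < 1"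
      using key_tan[OF n th] by blast
    moreover have "\<bar>real_of_int (-A) * real n + real_of_int (-B) + real_of_int (-B) * real n * tan \<theta>\<bar>
        = \<bar>real_of_int A * real n + real_of_int B + real_of_int B * real n * tan \<theta>\<bar>"
      by (simp add: abs_minus_commute algebra_simps)
    ultimately show ?thesis unfolding eq by linarith
  qed
qed



lemma hi_lo: "b \<ge> 1 \<Longrightarrow> n > 0 \<Longrightarrow> hi n b a - lo n b a = 2 / (real_of_int b * real n)"
  unfolding hi_def lo_def by (simp add: diff_divide_distrib[symmetric])

lemma Qs_finite: "finite (Qs n)" unfolding Qs_def by auto

lemma sum_Qs:
  assumes n: "n \<ge> 2"
  shows "(\<Sum>p\<in>Qs n. 2 / (real_of_int (fst p) * real n)) \<le> 1 / 4"
proof -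
  have n0: "real n \<ge> 2" using n by simp
  have "(\<Sum>p\<in>Qs n. 2 / (real_of_int (fst p) * real n))
      = (\<Sum>b\<in>{1..<int (JJ n)}. \<Sum>a\<in>{-b-1..0}. 2 / (real_of_int b * real n))"
    unfolding Qs_def by (subst sum.Sigma) (auto simp: case_prod_beta)
  also have "\<dots> = (\<Sum>b\<in>{1..<int (JJ n)}. real_of_int (b + 2) * (2 / (real_of_int b * real n)))"
  proof (rule sum.cong[OF refl])
    fix b :: int assume b: "b \<in> {1..<int (JJ n)}"
    have "card {-b-1..0} = nat (b + 2)" by simp
    then show "(\<Sum>a\<in>{-b-1..0}. 2 / (real_of_int b * real n)) = real_of_int (b + 2) * (2 / (real_of_int b * real n))"
      using b by simp
  qed
  also have "\<dots> \<le> (\<Sum>b\<in>{1..<int (JJ n)}. 6 / real n)"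
  proof (rule sum_mono)
    fix b :: int assume b: "b \<in> {1..<int (JJ n)}"
    then have b1: "real_of_int b \<ge> 1" by simp
    have "real_of_int (b + 2) * (2 / (real_of_int b * real n)) = (2 * real_of_int b + 4) / (real_of_int b * real n)"
      by (simp add: algebra_simps)
    also have "\<dots> \<le> (6 * real_of_int b) / (real_of_int b * real n)"
      using b1 n0 by (intro divide_right_mono) auto
    also have "\<dots> = 6 / real n" using b1 by simp
    finally show "real_of_int (b + 2) * (2 / (real_of_int b * real n)) \<le> 6 / real n" .
  qed
  also have "\<dots> = real (JJ n - 1) * (6 / real n)" by (simp add: JJ_def)
  also have "\<dots> \<le> 1 / 4"
  proof -
    have "24 * (JJ n - 1) \<le> n" unfolding JJ_def by simp
    then have "24 * real (JJ n - 1) \<le> real n" by linarith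
    then show ?thesis using n0 by (simp add: field_simps)
  qed
  finally show ?thesis .
qed

lemma Bad_measure:
  assumes n: "n \<ge> 2"
  shows "emeasure lborel (Bad n) \<le> ennreal (1/4)"
proof -
  have n0: "real n > 0" using n by simp
  have "emeasure lborel (Bad n) \<le> (\<Sum>p\<in>Qs n. emeasure lborel {arctan (lo n (fst p) (snd p)) .. arctan (hi n (fst p) (snd p))})"
    unfolding Bad_def by (rule emeasure_subadditive_finite[OF Qs_finite]) auto
  also have "\<dots> \<le> (\<Sum>p\<in>Qs n. ennreal (2 / (real_of_int (fst p) * real n)))"
  proof (rule sum_mono)
    fix p assume p: "p \<in> Qs n"
    then have b1: "fst p \<ge> 1" unfolding Qs_def by auto
    have hl: "hi n (fst p) (snd p) - lo n (fst p) (snd p) = 2 / (real_of_int (fst p) * real n)"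
      by (rule hi_lo[OF b1]) (use n in simp)
    then have le: "lo n (fst p) (snd p) \<le> hi n (fst p) (snd p)" using b1 n0
      by (smt (verit) divide_pos_pos of_int_pos zero_less_mult_iff)
    have "arctan (lo n (fst p) (snd p)) \<le> arctan (hi n (fst p) (snd p))" using le by (rule arctan_monotone')
    then have "emeasure lborel {arctan (lo n (fst p) (snd p)) .. arctan (hi n (fst p) (snd p))}
        = ennreal (arctan (hi n (fst p) (snd p)) - arctan (lo n (fst p) (snd p)))" by simp
    also have "\<dots> \<le> ennreal (2 / (real_of_int (fst p) * real n))"
      using arctan_lip[OF le] hl by (intro ennreal_leI) simp
    finally show "emeasure lborel {arctan (lo n (fst p) (snd p)) .. arctan (hi n (fst p) (snd p))}
        \<le> ennreal (2 / (real_of_int (fst p) * real n))" .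
  qed
  also have "\<dots> = ennreal (\<Sum>p\<in>Qs n. 2 / (real_of_int (fst p) * real n))"
    by (rule sum_ennreal) (auto simp: Qs_def)
  also have "\<dots> \<le> ennreal (1/4)" by (rule ennreal_leI[OF sum_Qs[OF n]])
  finally show ?thesis .
qed

lemma Good_measure:
  assumes n: "n \<ge> 2"
  shows "ennreal (1/2) \<le> emeasure lborel (Good n)" "Good n \<in> sets lborel" "Good n \<subseteq> {0..<pi}"
proof -
  have Bm: "Bad n \<in> sets lborel" unfolding Bad_def by (intro sets.finite_UN Qs_finite) auto
  show Gm: "Good n \<in> sets lborel" unfolding Good_def using Bm by auto
  show "Good n \<subseteq> {0..<pi}"
  proof
    fix x assume "x \<in> Good n"
    then have "0 \<le> x" "x \<le> pi/4" unfolding Good_def by auto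
    moreover have "x < pi" using \<open>0 \<le> x\<close> \<open>x \<le> pi/4\<close> pi_gt_zero by linarith
    ultimately show "x \<in> {0..<pi}" by simp
  qed
  have "ennreal (pi/4) = emeasure lborel {0..pi/4}" using pi_gt_zero by simp
  also have "\<dots> \<le> emeasure lborel (Good n \<union> Bad n)"
    by (rule emeasure_mono) (use Gm Bm in \<open>auto simp: Good_def\<close>)
  also have "\<dots> \<le> emeasure lborel (Good n) + emeasure lborel (Bad n)"
    by (rule emeasure_subadditive[OF Gm Bm])
  also have "\<dots> \<le> emeasure lborel (Good n) + ennreal (1/4)"
    by (rule add_left_mono[OF Bad_measure[OF n]])
  finally have h: "ennreal (pi/4) \<le> emeasure lborel (Good n) + ennreal (1/4)" .
  show "ennreal (1/2) \<le> emeasure lborel (Good n)"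
  proof (rule ccontr)
    assume "\<not> ennreal (1/2) \<le> emeasure lborel (Good n)"
    then have lt: "emeasure lborel (Good n) < ennreal (1/2)" by simp
    then obtain g where g: "emeasure lborel (Good n) = ennreal g" "0 \<le> g"
      by (cases "emeasure lborel (Good n)") auto
    have "ennreal g < ennreal (1/2)" using lt unfolding g(1) .
    then have "g < 1/2" using g(2) ennreal_less_iff by blast
    have "ennreal (pi/4) \<le> ennreal g + ennreal (1/4)" using h unfolding g(1) .
    also have "ennreal g + ennreal (1/4) = ennreal (g + 1/4)" by (rule ennreal_plus[symmetric]) (use g in auto)
    finally have "ennreal (pi/4) \<le> ennreal (g + 1/4)" .
    then have "pi/4 \<le> g + 1/4" using g(2) ennreal_le_iff by (metis add_nonneg_nonneg zero_le_divide_iff zero_le_numeral zero_le_one)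
    then show False using \<open>g < 1/2\<close> pi_gt3 by linarith
  qed
qed



definition AA :: "nat \<Rightarrow> real \<Rightarrow> nat \<Rightarrow> nat \<Rightarrow> real" where
  "AA n \<theta> i j = (real i * real n + real j) / (real n)\<^sup>2 * cos \<theta> + real j / real n * sin \<theta>"

lemma cos_range:
  assumes "\<theta> \<in> {0..pi/4}"
  shows "1/2 \<le> cos \<theta>"
proof -
  have a: "0 \<le> \<theta>" "\<theta> \<le> pi/4" using assms by auto
  have "cos (pi/3) \<le> cos \<theta>" by (rule cos_monotone_0_pi_le) (use a pi_gt_zero in linarith)+
  then show ?thesis by (simp add: cos_60)
qed

lemma proj_piece:
  assumes n: "n \<ge> 2" and th: "\<theta> \<in> {0..pi/4}" and j: "j < n"
  shows "{AA n \<theta> i j ..< AA n \<theta> i j + cos \<theta> / (real n)\<^sup>2} \<subseteq> proj \<theta> ` PP n (i * n + j)"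
proof
  fix y assume y: "y \<in> {AA n \<theta> i j ..< AA n \<theta> i j + cos \<theta> / (real n)\<^sup>2}"
  have c0: "cos \<theta> > 0" using cos_range[OF th] by linarith
  define s where "s = (y - AA n \<theta> i j) / cos \<theta>"
  have s0: "0 \<le> s" using y c0 unfolding s_def by simp
  have "y - AA n \<theta> i j < cos \<theta> / (real n)\<^sup>2" using y by simp
  then have s1: "s \<le> 1 / (real n)\<^sup>2" using c0 unfolding s_def by (simp add: pos_divide_le_eq field_simps)
  have md: "(i * n + j) mod n = j" using j by simp
  define x where "x = (real (i * n + j) / (real n)\<^sup>2 + s, real ((i * n + j) mod n) / real n)"
  have xin: "x \<in> PP n (i * n + j)" unfolding PP_mem x_def using s0 s1 by blast
  have "proj \<theta> x = (real (i * n + j) / (real n)\<^sup>2 + s) * cos \<theta> + real j / real n * sin \<theta>"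
    unfolding proj_def x_def md by simp
  also have "\<dots> = AA n \<theta> i j + s * cos \<theta>" unfolding AA_def by (simp add: algebra_simps)
  also have "\<dots> = y" unfolding s_def using c0 by simp
  finally show "y \<in> proj \<theta> ` PP n (i * n + j)" using xin by force
qed

lemma AA_diff:
  assumes c: "cos \<theta> \<noteq> 0" and n: "real n > 0"
  shows "AA n \<theta> i j - AA n \<theta> i' j' = cos \<theta> / (real n)\<^sup>2 *
    ((real i - real i') * real n + (real j - real j') + (real j - real j') * real n * tan \<theta>)"
proof -
  have "sin \<theta> = tan \<theta> * cos \<theta>" using c by (simp add: tan_def)
  then show ?thesis unfolding AA_def using n by (simp add: field_simps power2_eq_square)
qed

lemma proj_good:
  assumes n: "n \<ge> 2" and th: "\<theta> \<in> Good n"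
  shows "ennreal (1/96) \<le> H1 (proj \<theta> ` EE n)"
proof -
  have th0: "\<theta> \<in> {0..pi/4}" using th unfolding Good_def by auto
  have c2: "1/2 \<le> cos \<theta>" by (rule cos_range[OF th0])
  have c0: "cos \<theta> > 0" using c2 by linarith
  have n0: "real n \<ge> 2" using n by simp
  define w where "w = cos \<theta> / (real n)\<^sup>2"
  have w0: "w > 0" unfolding w_def using c0 n0 by simp
  define I where "I = {..<n} \<times> {..<JJ n}"
  define F where "F p = {AA n \<theta> (fst p) (snd p) ..< AA n \<theta> (fst p) (snd p) + w}" for p
  have fI: "finite I" unfolding I_def by simp
  have disj: "disjoint_family_on F I"
    unfolding disjoint_family_on_def
  proof (intro ballI impI)
    fix p q assume pq: "p \<in> I" "q \<in> I" "p \<noteq> q"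
    obtain i j i' j' where ij: "p = (i, j)" "q = (i', j')" by (cases p, cases q) auto
    have sep: "1 \<le> \<bar>(real i - real i') * real n + (real j - real j') + (real j - real j') * real n * tan \<theta>\<bar>"
      by (rule good_sep[OF n th]) (use pq ij in \<open>auto simp: I_def\<close>)
    have "\<bar>AA n \<theta> i j - AA n \<theta> i' j'\<bar> = w * \<bar>(real i - real i') * real n + (real j - real j') + (real j - real j') * real n * tan \<theta>\<bar>"
      unfolding AA_diff[OF _ , of \<theta> n i j i' j', OF _] w_def using c0 n0 by (simp add: AA_diff abs_mult)
    also have "\<dots> \<ge> w * 1" using sep w0 by (intro mult_left_mono) auto
    finally have "w \<le> \<bar>AA n \<theta> i j - AA n \<theta> i' j'\<bar>" by simp
    then show "F p \<inter> F q = {}" unfolding F_def ij by auto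
  qed
  have sub: "(\<Union>p\<in>I. F p) \<subseteq> proj \<theta> ` EE n"
  proof (rule UN_least)
    fix p assume p: "p \<in> I"
    obtain i j where ij: "p = (i, j)" by (cases p)
    have ijb: "i < n" "j < JJ n" using p ij unfolding I_def by auto
    then have jn: "j < n" using JJ_le[OF n] by linarith
    have m: "i * n + j < n\<^sup>2"
    proof -
      have "i * n + j < i * n + n" using jn by simp
      also have "\<dots> = (i + 1) * n" by simp
      also have "\<dots> \<le> n * n" using ijb(1) by (intro mult_right_mono) auto
      finally show ?thesis by (simp add: power2_eq_square)
    qed
    have "F p \<subseteq> proj \<theta> ` PP n (i * n + j)" unfolding F_def ij w_def using proj_piece[OF n th0 jn] by simp
    also have "\<dots> \<subseteq> proj \<theta> ` EE n" unfolding EE_def using m by blast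
    finally show "F p \<subseteq> proj \<theta> ` EE n" .
  qed
  have "emeasure lborel (\<Union>p\<in>I. F p) = (\<Sum>p\<in>I. emeasure lborel (F p))"
  proof -
    have Fm: "F ` I \<subseteq> sets lborel" by (auto simp: F_def)
    show ?thesis by (rule sum_emeasure[symmetric, OF Fm disj fI])
  qed
  also have "\<dots> = (\<Sum>p\<in>I. ennreal w)" unfolding F_def using w0 by simp
  also have "\<dots> = ennreal (real (card I) * w)"
    using w0 by (simp add: ennreal_of_nat_eq_real_of_nat ennreal_mult)
  finally have em: "emeasure lborel (\<Union>p\<in>I. F p) = ennreal (real (card I) * w)" .
  have "1/96 \<le> real (card I) * w"
  proof -
    have cI: "real (card I) = real n * real (JJ n)" unfolding I_def by (simp add: card_cartesian_product)
    have "n \<le> 48 * JJ n" unfolding JJ_def by presburger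
    then have J: "real n \<le> 48 * real (JJ n)" by linarith
    have "real (card I) * w = real (JJ n) * cos \<theta> / real n" unfolding cI w_def using n0
      by (simp add: power2_eq_square)
    also have "\<dots> \<ge> real (JJ n) * (1/2) / real n" using c2 n0 by (intro divide_right_mono mult_left_mono) auto
    finally have "real (JJ n) * (1/2) / real n \<le> real (card I) * w" .
    moreover have "1/96 \<le> real (JJ n) * (1/2) / real n" using J n0 by (simp add: field_simps)
    ultimately show ?thesis by linarith
  qed
  then have "ennreal (1/96) \<le> emeasure lborel (\<Union>p\<in>I. F p)" unfolding em by (rule ennreal_leI)
  also have "\<dots> \<le> H1 (\<Union>p\<in>I. F p)" by (rule lborel_le_H1) (auto simp: F_def)
  also have "\<dots> \<le> H1 (proj \<theta> ` EE n)" by (rule H1_mono[OF sub])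
  finally show ?thesis .
qed

lemma Fav_EE:
  assumes n: "n \<ge> 2"
  shows "ennreal (1/192) \<le> Fav (EE n)"
proof -
  note G = Good_measure[OF n]
  have "ennreal (1/192) = ennreal (1/96) * ennreal (1/2)" by (subst ennreal_mult[symmetric]) auto
  also have "\<dots> \<le> ennreal (1/96) * emeasure lborel (Good n)" by (rule mult_left_mono[OF G(1)]) simp
  also have "\<dots> = (\<integral>\<^sup>+ t \<in> Good n. ennreal (1/96) \<partial>lborel)"
    by (rule nn_integral_cmult_indicator[OF G(2), symmetric])
  also have "\<dots> \<le> (\<integral>\<^sup>+ t \<in> {0..<pi}. H1 (proj t ` EE n) \<partial>lborel)"
  proof (rule nn_integral_mono)
    fix t
    show "ennreal (1/96) * indicator (Good n) t \<le> H1 (proj t ` EE n) * indicator {0..<pi} t"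
    proof (cases "t \<in> Good n")
      case True
      then have "t \<in> {0..<pi}" using G(3) by auto
      then show ?thesis using True proj_good[OF n True] by simp
    qed simp
  qed
  also have "\<dots> = Fav (EE n)" unfolding Fav_def by simp
  finally show ?thesis .
qed


theorem proposition6p1:
  shows "\<exists>(\<delta>::real) (c::real) (C::real) (E :: nat \<Rightarrow> (real \<times> real) set).
     \<delta> > 0 \<and> c > 0 \<and>
     (\<forall>n\<ge>2.
        compact (E n) \<and> rectifiable_set (E n) \<and> E n \<subseteq> cbox (0,0) (1,1) \<and>
        H1 (E n) = 1 \<and>
        ennreal \<delta> \<le> Fav (E n) \<and>
        (\<forall>\<alpha> G. 2 / (real n)\<^sup>2 \<le> \<alpha> \<and> \<alpha> < 1 \<and> is_curve_set G \<and> ennreal \<alpha> \<le> H1 (G \<inter> E n)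
            \<longrightarrow> ennreal (c * \<alpha> * real n) \<le> H1 G) \<and>
        (\<forall>M G. M \<ge> 1 \<and> lipschitz_graph M G \<longrightarrow> H1 (G \<inter> E n) \<le> ennreal (C * M / real n)))"
proof -
  have main: "compact (EE n) \<and> rectifiable_set (EE n) \<and> EE n \<subseteq> cbox (0,0) (1,1) \<and>
        H1 (EE n) = 1 \<and>
        ennreal (1/192) \<le> Fav (EE n) \<and>
        (\<forall>\<alpha> G. 2 / (real n)\<^sup>2 \<le> \<alpha> \<and> \<alpha> < 1 \<and> is_curve_set G \<and> ennreal \<alpha> \<le> H1 (G \<inter> EE n)
            \<longrightarrow> ennreal (1/8 * \<alpha> * real n) \<le> H1 G) \<and>
        (\<forall>M G. M \<ge> 1 \<and> lipschitz_graph M G \<longrightarrow> H1 (G \<inter> EE n) \<le> ennreal (17 * M / real n))"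
    if n: "2 \<le> n" for n
  proof (intro conjI allI impI)
    show "compact (EE n)" by (rule compact_EE)
    show "rectifiable_set (EE n)" by (rule rect_EE[OF n])
    show "EE n \<subseteq> cbox (0, 0) (1, 1)" by (rule EE_sub_box[OF n])
    show "H1 (EE n) = 1" using H1_EE_le[OF n] H1_EE_ge[OF n] by (rule antisym)
    show "ennreal (1/192) \<le> Fav (EE n)" by (rule Fav_EE[OF n])
    show "ennreal (1/8 * \<alpha> * real n) \<le> H1 G"
      if "2 / (real n)\<^sup>2 \<le> \<alpha> \<and> \<alpha> < 1 \<and> is_curve_set G \<and> ennreal \<alpha> \<le> H1 (G \<inter> EE n)" for \<alpha> G
      using curve_bound[OF n] that by blast
    show "H1 (G \<inter> EE n) \<le> ennreal (17 * M / real n)"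
      if "1 \<le> M \<and> lipschitz_graph M G" for M G
      using graph_bound[OF n] that by blast
  qed
  have d: "(0::real) < 1/192" "(0::real) < 1/8" by simp_all
  show ?thesis
    apply (rule exI[of _ "1/192"], rule exI[of _ "1/8"], rule exI[of _ 17], rule exI[of _ EE])
    using d main by blast
qed

end
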